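(* If $U$ and $V$ are nonempty open subsets of $\Omega$, then there exists $N\in\mathbb Z^+$ such that $U\cap T^nV\neq\emptyset$ (equivalently $T^{-n}U\cap V\ne\emptyset$) for all $n\ge N$.
   Context: Let $I=[0,1)$ with its usual metric $d_I$, fix $\theta\in(0,1)$, and let $\Omega=I^{\mathbb Z}$ with metric $d(x,y)=\sup_{k\in\mathbb Z}\theta^{|k|}d_I(x_k,y_k)$. Let $\tau:I\to I$ have full branches, so that $b=\#\tau^{-1}(t)$ is constant. Assume there is $\eta\in(0,1)$ such that every inverse branch $\zeta$ of $\tau$ satisfies $d_I(\zeta(s),\zeta(t))\le\eta\,d_I(s,t)$. Let $(\bar\tau x)_i=\tau(x_i)$ and let $\sigma$ be the shift $(\sigma x)_i=x_{i+1}$. Let $E:\Omega\to\Omega$ be invertible and suppose there is $C_E\in(0,\eta^{-1})$ with $d(\sigma^nE^{-1}x,\sigma^nE^{-1}y)\le C_E\,d(\sigma^nx,\sigma^ny)$ for all $n\in\mathbb Z$ and $x,y\in\Omega$. The coupled map is $T=E\circ\bar\tau$. *)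

theory Defs
  imports "HOL-Analysis.Analysis"
begin

definition Iset :: "real set" where
  "Iset = {0..<1}"

definition Omega :: "(int \<Rightarrow> real) set" where
  "Omega = {x. \<forall>k. x k \<in> Iset}"

definition dOm :: "real \<Rightarrow> (int \<Rightarrow> real) \<Rightarrow> (int \<Rightarrow> real) \<Rightarrow> real" where
  "dOm \<theta> x y = (SUP k. \<theta> ^ nat \<bar>k\<bar> * \<bar>x k - y k\<bar>)"

definition openOm :: "real \<Rightarrow> (int \<Rightarrow> real) set \<Rightarrow> bool" where
  "openOm \<theta> U \<longleftrightarrow> U \<subseteq> Omega \<and>
     (\<forall>x\<in>U. \<exists>e>0. \<forall>y\<in>Omega. dOm \<theta> x y < e \<longrightarrow> y \<in> U)"

definition shiftn :: "int \<Rightarrow> (int \<Rightarrow> real) \<Rightarrow> (int \<Rightarrow> real)" where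
  "shiftn n x = (\<lambda>i. x (i + n))"

definition taubar :: "(real \<Rightarrow> real) \<Rightarrow> (int \<Rightarrow> real) \<Rightarrow> (int \<Rightarrow> real)" where
  "taubar \<tau> x = (\<lambda>i. \<tau> (x i))"

definition full_branches :: "(real \<Rightarrow> real) \<Rightarrow> nat \<Rightarrow> (nat \<Rightarrow> real \<Rightarrow> real) \<Rightarrow> bool" where
  "full_branches \<tau> b \<zeta> \<longleftrightarrow>
     \<tau> ` Iset \<subseteq> Iset \<and>
     (\<forall>t\<in>Iset. {s\<in>Iset. \<tau> s = t} = (\<lambda>j. \<zeta> j t) ` {..<b} \<and>
                inj_on (\<lambda>j. \<zeta> j t) {..<b} \<and>
                (\<forall>j<b. \<zeta> j t \<in> Iset \<and> \<tau> (\<zeta> j t) = t))"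

end

theory Submission
  imports Defs
begin

lemma dOm_term_bound:
  assumes "x \<in> Omega" "y \<in> Omega" "0 < \<theta>" "\<theta> < 1"
  shows "\<theta> ^ nat \<bar>k\<bar> * \<bar>x k - y k\<bar> \<le> 1"
proof -
  have a: "\<theta> ^ nat \<bar>k\<bar> \<le> 1" using assms by (simp add: power_le_one)
  have "0 \<le> x k" "x k < 1" "0 \<le> y k" "y k < 1" using assms by (auto simp: Omega_def Iset_def)
  then have b: "\<bar>x k - y k\<bar> \<le> 1" by linarith
  have "\<theta> ^ nat \<bar>k\<bar> * \<bar>x k - y k\<bar> \<le> 1 * 1"
    by (rule mult_mono[OF a b]) (use assms in auto)
  then show ?thesis by simp
qed

lemma dOm_bdd:
  assumes "x \<in> Omega" "y \<in> Omega" "0 < \<theta>" "\<theta> < 1"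
  shows "bdd_above (range (\<lambda>k. \<theta> ^ nat \<bar>k\<bar> * \<bar>x k - y k\<bar>))"
  using dOm_term_bound[OF assms] by (intro bdd_aboveI[where M=1]) auto

lemma dOm_le1:
  assumes "x \<in> Omega" "y \<in> Omega" "0 < \<theta>" "\<theta> < 1"
  shows "dOm \<theta> x y \<le> 1"
  unfolding dOm_def using dOm_term_bound[OF assms] by (intro cSUP_least) auto

lemma dOm_contr:
  assumes "x \<in> Omega" "y \<in> Omega" "0 < \<theta>" "\<theta> < 1" "0 \<le> c"
    and "\<And>k. \<bar>a k - b k\<bar> \<le> c * \<bar>x k - y k\<bar>"
  shows "dOm \<theta> a b \<le> c * dOm \<theta> x y"
  unfolding dOm_def
proof (rule cSUP_least)
  fix k :: int
  have "\<theta> ^ nat \<bar>k\<bar> * \<bar>a k - b k\<bar> \<le> \<theta> ^ nat \<bar>k\<bar> * (c * \<bar>x k - y k\<bar>)"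
    using assms by (intro mult_left_mono) auto
  also have "\<dots> = c * (\<theta> ^ nat \<bar>k\<bar> * \<bar>x k - y k\<bar>)" by simp
  also have "\<dots> \<le> c * (SUP k. \<theta> ^ nat \<bar>k\<bar> * \<bar>x k - y k\<bar>)"
    using assms dOm_bdd[OF assms(1-4)] by (intro mult_left_mono cSUP_upper) auto
  finally show "\<theta> ^ nat \<bar>k\<bar> * \<bar>a k - b k\<bar> \<le> c * (SUP k. \<theta> ^ nat \<bar>k\<bar> * \<bar>x k - y k\<bar>)" .
qed auto

theorem mainTheorem12:
  fixes \<theta> \<eta> C\<^sub>E :: real and \<tau> :: "real \<Rightarrow> real" and b :: nat
    and \<zeta> :: "nat \<Rightarrow> real \<Rightarrow> real"
    and E :: "(int \<Rightarrow> real) \<Rightarrow> (int \<Rightarrow> real)"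
    and U V :: "(int \<Rightarrow> real) set"
  assumes theta: "0 < \<theta>" "\<theta> < 1"
    and branches: "full_branches \<tau> b \<zeta>"
    and eta: "0 < \<eta>" "\<eta> < 1"
    and contr: "\<And>j s t. j < b \<Longrightarrow> s \<in> Iset \<Longrightarrow> t \<in> Iset \<Longrightarrow>
                  \<bar>\<zeta> j s - \<zeta> j t\<bar> \<le> \<eta> * \<bar>s - t\<bar>"
    and E_bij: "bij_betw E Omega Omega"
    and CE: "0 < C\<^sub>E" "C\<^sub>E < 1 / \<eta>"
    and E_lip: "\<And>n x y. x \<in> Omega \<Longrightarrow> y \<in> Omega \<Longrightarrow>
                  dOm \<theta> (shiftn n (inv_into Omega E x)) (shiftn n (inv_into Omega E y))
                    \<le> C\<^sub>E * dOm \<theta> (shiftn n x) (shiftn n y)"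
    and U: "openOm \<theta> U" "U \<noteq> {}"
    and V: "openOm \<theta> V" "V \<noteq> {}"
  shows "\<exists>N::nat. 0 < N \<and> (\<forall>n\<ge>N. U \<inter> ((E \<circ> taubar \<tau>) ^^ n) ` V \<noteq> {})"
proof -
  define T where "T = E \<circ> taubar \<tau>"
  define Ei where "Ei = inv_into Omega E"
  define lam where "lam = \<eta> * C\<^sub>E"
  have lam0: "0 < lam" using eta CE by (simp add: lam_def)
  have lam1: "lam < 1" using eta CE by (simp add: lam_def field_simps)
  have sh0: "shiftn 0 x = x" for x by (simp add: shiftn_def)
  have Elip: "dOm \<theta> (Ei x) (Ei y) \<le> C\<^sub>E * dOm \<theta> x y" if "x \<in> Omega" "y \<in> Omega" for x y
    using E_lip[OF that, of 0] by (simp add: sh0 Ei_def)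
  have EO: "E w \<in> Omega" if "w \<in> Omega" for w using E_bij that by (auto simp: bij_betw_def)
  have EiO: "Ei z \<in> Omega" if "z \<in> Omega" for z
    using E_bij that unfolding Ei_def bij_betw_def by (auto intro: inv_into_into)
  have EEi: "E (Ei z) = z" if "z \<in> Omega" for z
    using E_bij that unfolding Ei_def bij_betw_def by (metis f_inv_into_f)
  have EiE: "Ei (E w) = w" if "w \<in> Omega" for w
    using E_bij that unfolding Ei_def bij_betw_def by (auto intro: inv_into_f_f)
  have tauI: "\<tau> s \<in> Iset" if "s \<in> Iset" for s using branches that by (auto simp: full_branches_def)
  have tbO: "taubar \<tau> w \<in> Omega" if "w \<in> Omega" for w
    using that tauI by (auto simp: Omega_def taubar_def)
  have TO: "T w \<in> Omega" if "w \<in> Omega" for w using that tbO EO by (simp add: T_def)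
  have TnO: "(T ^^ n) w \<in> Omega" if "w \<in> Omega" for w n
    using that by (induction n) (auto intro: TO)
  define br where "br w i = (SOME j. j < b \<and> \<zeta> j (\<tau> (w i)) = w i)" for w :: "int \<Rightarrow> real" and i
  have br: "br w i < b \<and> \<zeta> (br w i) (\<tau> (w i)) = w i" if "w \<in> Omega" for w i
  proof -
    have wi: "w i \<in> Iset" using that by (simp add: Omega_def)
    then have "w i \<in> {s\<in>Iset. \<tau> s = \<tau> (w i)}" by simp
    also have "\<dots> = (\<lambda>j. \<zeta> j (\<tau> (w i))) ` {..<b}" using branches tauI[OF wi] by (simp add: full_branches_def)
    finally obtain j where "j < b" "\<zeta> j (\<tau> (w i)) = w i" by auto
    then show ?thesis unfolding br_def by (metis (mono_tags, lifting) someI)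
  qed
  define S where "S w z = (\<lambda>i. \<zeta> (br w i) (Ei z i))" for w z
  have zI: "\<zeta> j t \<in> Iset \<and> \<tau> (\<zeta> j t) = t" if "j < b" "t \<in> Iset" for j t
    using branches that by (auto simp: full_branches_def)
  have SO: "S w z \<in> Omega" "T (S w z) = z" if "w \<in> Omega" "z \<in> Omega" for w z
  proof -
    have "Ei z i \<in> Iset" for i using EiO[OF that(2)] by (simp add: Omega_def)
    then have h: "\<zeta> (br w i) (Ei z i) \<in> Iset \<and> \<tau> (\<zeta> (br w i) (Ei z i)) = Ei z i" for i
      using zI br[OF that(1)] by blast
    show "S w z \<in> Omega" using h by (simp add: S_def Omega_def)
    have "taubar \<tau> (S w z) = Ei z" using h by (simp add: S_def taubar_def)
    then show "T (S w z) = z" using EEi[OF that(2)] by (simp add: T_def)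
  qed
  have STw: "S w (T w) = w" if "w \<in> Omega" for w
  proof -
    have "Ei (T w) = taubar \<tau> w" using EiE[OF tbO[OF that]] by (simp add: T_def)
    then show ?thesis using br[OF that] by (simp add: S_def taubar_def)
  qed
  have Scontr: "dOm \<theta> (S w z) (S w z') \<le> lam * dOm \<theta> z z'"
    if "w \<in> Omega" "z \<in> Omega" "z' \<in> Omega" for w z z'
  proof -
    have "dOm \<theta> (S w z) (S w z') \<le> \<eta> * dOm \<theta> (Ei z) (Ei z')"
    proof (rule dOm_contr[OF EiO[OF that(2)] EiO[OF that(3)] theta])
      show "0 \<le> \<eta>" using eta by simp
      fix k
      show "\<bar>S w z k - S w z' k\<bar> \<le> \<eta> * \<bar>Ei z k - Ei z' k\<bar>"
        unfolding S_def using contr br[OF that(1)] EiO[OF that(2)] EiO[OF that(3)]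
        by (auto simp: Omega_def)
    qed
    also have "\<dots> \<le> \<eta> * (C\<^sub>E * dOm \<theta> z z')"
      using Elip[OF that(2,3)] eta by (intro mult_left_mono) auto
    finally show ?thesis by (simp add: lam_def mult.assoc)
  qed
  have fs: "(T ^^ Suc m) y = (T ^^ m) (T y)" for m y by (metis comp_apply funpow_Suc_right)
  have key: "\<forall>w\<in>Omega. \<exists>x\<in>Omega. (T ^^ n) x = u \<and> dOm \<theta> w x \<le> lam ^ n * dOm \<theta> ((T ^^ n) w) u"
    if u: "u \<in> Omega" for u n
  proof (induction n)
    case 0
    then show ?case using u by auto
  next
    case (Suc n)
    show ?case
    proof
      fix w assume w: "w \<in> Omega"
      obtain x' where x': "x' \<in> Omega" "(T ^^ n) x' = u"
        "dOm \<theta> (T w) x' \<le> lam ^ n * dOm \<theta> ((T ^^ n) (T w)) u"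
        using Suc TO[OF w] by blast
      have "(T ^^ Suc n) (S w x') = u" using SO[OF w x'(1)] x'(2) by (simp only: fs)
      moreover have "dOm \<theta> w (S w x') \<le> lam ^ Suc n * dOm \<theta> ((T ^^ Suc n) w) u"
      proof -
        have "dOm \<theta> w (S w x') = dOm \<theta> (S w (T w)) (S w x')" using STw[OF w] by simp
        also have "\<dots> \<le> lam * dOm \<theta> (T w) x'" using Scontr[OF w TO[OF w] x'(1)] .
        also have "\<dots> \<le> lam * (lam ^ n * dOm \<theta> ((T ^^ n) (T w)) u)"
          using x'(3) lam0 by (intro mult_left_mono) auto
        finally show ?thesis by (simp only: fs power_Suc mult.assoc)
      qed
      ultimately show "\<exists>x\<in>Omega. (T ^^ Suc n) x = u \<and> dOm \<theta> w x \<le> lam ^ Suc n * dOm \<theta> ((T ^^ Suc n) w) u"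
        using SO(1)[OF w x'(1)] by blast
    qed
  qed
  obtain u where u: "u \<in> U" using U by auto
  obtain v where v: "v \<in> V" using V by auto
  have uO: "u \<in> Omega" and vO: "v \<in> Omega" using u v U V by (auto simp: openOm_def)
  obtain e where e: "e > 0" "\<forall>y\<in>Omega. dOm \<theta> v y < e \<longrightarrow> y \<in> V"
    using V v unfolding openOm_def by blast
  obtain N where N: "lam ^ N < e" using real_arch_pow_inv[OF e(1) lam1] by blast
  show ?thesis
  proof (intro exI[of _ "Suc N"] conjI allI impI)
    fix n assume n: "Suc N \<le> n"
    obtain x where x: "x \<in> Omega" "(T ^^ n) x = u" "dOm \<theta> v x \<le> lam ^ n * dOm \<theta> ((T ^^ n) v) u"
      using key[OF uO, of n] vO by blast
    have "lam ^ n * dOm \<theta> ((T ^^ n) v) u \<le> lam ^ n * 1"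
      using dOm_le1[OF TnO[OF vO] uO theta] lam0 by (intro mult_left_mono) auto
    also have "\<dots> \<le> lam ^ N" using n lam0 lam1 by (simp add: power_decreasing)
    finally have "dOm \<theta> v x < e" using x(3) N by linarith
    then have "x \<in> V" using e x(1) by blast
    then have "u \<in> U \<inter> (T ^^ n) ` V" using u x(2) by blast
    then show "U \<inter> ((E \<circ> taubar \<tau>) ^^ n) ` V \<noteq> {}" unfolding T_def by blast
  qed simp
qed

end
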